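(* Let $\mathbb{F}$ be a field and let $\mathcal{C}_2 \subsetneqq \mathcal{C}_1 \subseteq \mathbb{F}^n$ be linear codes with $\ell = \dim(\mathcal{C}_1) - \dim(\mathcal{C}_2)$. Then for all integers $1 \leq r \leq \ell$ and $0 \leq \mu \leq n$: $$d_{H,r}(\mathcal{C}_1,\mathcal{C}_2) = d_{M,r}(\Delta(\mathcal{C}_1), \Delta(\mathcal{C}_2)), \qquad K_{H,\mu}(\mathcal{C}_1,\mathcal{C}_2) = K_{M,\mu}(\Delta(\mathcal{C}_1), \Delta(\mathcal{C}_2)).$$
   Context: $\Delta : \mathbb{F}^n \to \mathbb{F}^{n \times n}$ sends $\mathbf{c}$ to the diagonal matrix ${\rm diag}(\mathbf{c})$. For $I \subseteq \{1,\dots,n\}$, $\mathcal{L}_I = \{(c_1,\dots,c_n) \in \mathbb{F}^n \mid c_i = 0 \ \forall i \notin I\}$. Relative generalized Hamming weights: $d_{H,r}(\mathcal{C}_1,\mathcal{C}_2) = \min\{|I| \mid I \subseteq \{1,\dots,n\}, \dim(\mathcal{C}_1 \cap \mathcal{L}_I) - \dim(\mathcal{C}_2 \cap \mathcal{L}_I) \ge r\}$; relative dimension/length profile: $K_{H,\mu}(\mathcal{C}_1,\mathcal{C}_2) = \max\{\dim(\mathcal{C}_1 \cap \mathcal{L}_I) - \dim(\mathcal{C}_2 \cap \mathcal{L}_I) \mid |I| \le \mu\}$. On matrices in $\mathbb{F}^{n\times n}$ (here $m = n$): ${\rm Row}(V)$ is the row space; for a subspace $\mathcal{L}\subseteq\mathbb{F}^n$,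 $\mathcal{V}_\mathcal{L} = \{V \in \mathbb{F}^{n\times n} \mid {\rm Row}(V) \subseteq \mathcal{L}\}$; for nested linear codes $\mathcal{D}_2 \subsetneqq \mathcal{D}_1 \subseteq \mathbb{F}^{n\times n}$, $d_{M,r}(\mathcal{D}_1,\mathcal{D}_2) = \min\{\dim \mathcal{L} \mid \dim(\mathcal{D}_1 \cap \mathcal{V}_\mathcal{L}) - \dim(\mathcal{D}_2 \cap \mathcal{V}_\mathcal{L}) \ge r\}$ and $K_{M,\mu}(\mathcal{D}_1,\mathcal{D}_2) = \max\{\dim(\mathcal{D}_1 \cap \mathcal{V}_\mathcal{L}) - \dim(\mathcal{D}_2 \cap \mathcal{V}_\mathcal{L}) \mid \dim\mathcal{L} \le \mu\}$, over subspaces $\mathcal{L} \subseteq \mathbb{F}^n$. *)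

theory Defs
  imports "HOL-Analysis.Analysis"
begin

text \<open>F^n is modelled as 'a^'n with n = CARD('n); n x n matrices as 'a^'n^'n
  (row i of V is V $ i).  Linear codes are subspaces w.r.t. vec (scalar mult *s).\<close>

definition mat_scale :: "'a::field \<Rightarrow> 'a^'n^'m \<Rightarrow> 'a^'n^'m" where
  "mat_scale c V = (\<chi> i j. c * V $ i $ j)"

interpretation mat: vector_space "mat_scale :: 'a::field \<Rightarrow> 'a^'n^'m \<Rightarrow> 'a^'n^'m"
  by unfold_locales (auto simp: mat_scale_def vec_eq_iff algebra_simps)

definition Delta :: "'a::field^'n \<Rightarrow> 'a^'n^'n" where
  "Delta c = (\<chi> i j. if i = j then c $ i else 0)"

definition LI :: "'n set \<Rightarrow> ('a::field^'n) set" where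
  "LI I = {c. \<forall>i. i \<notin> I \<longrightarrow> c $ i = 0}"

definition dHr :: "nat \<Rightarrow> ('a::field^'n) set \<Rightarrow> ('a^'n) set \<Rightarrow> nat" where
  "dHr r C1 C2 = (LEAST m. \<exists>I::'n set. card I = m \<and>
      int (vec.dim (C1 \<inter> LI I)) - int (vec.dim (C2 \<inter> LI I)) \<ge> int r)"

definition KH :: "nat \<Rightarrow> ('a::field^'n) set \<Rightarrow> ('a^'n) set \<Rightarrow> int" where
  "KH \<mu> C1 C2 = Max {int (vec.dim (C1 \<inter> LI I)) - int (vec.dim (C2 \<inter> LI I)) | I::'n set. card I \<le> \<mu>}"

definition Row :: "'a::field^'n^'m \<Rightarrow> ('a^'n) set" where
  "Row V = vec.span {V $ i | i. True}"

definition VL :: "('a::field^'n) set \<Rightarrow> ('a^'n^'m) set" where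
  "VL L = {V. Row V \<subseteq> L}"

definition dMr :: "nat \<Rightarrow> ('a::field^'n^'m) set \<Rightarrow> ('a^'n^'m) set \<Rightarrow> nat" where
  "dMr r D1 D2 = (LEAST m. \<exists>L::('a^'n) set. vec.subspace L \<and> vec.dim L = m \<and>
      int (mat.dim (D1 \<inter> VL L)) - int (mat.dim (D2 \<inter> VL L)) \<ge> int r)"

definition KM :: "nat \<Rightarrow> ('a::field^'n^'m) set \<Rightarrow> ('a^'n^'m) set \<Rightarrow> int" where
  "KM \<mu> D1 D2 = Max {int (mat.dim (D1 \<inter> VL L)) - int (mat.dim (D2 \<inter> VL L)) | L::('a^'n) set.
      vec.subspace L \<and> vec.dim L \<le> \<mu>}"

end

theory Submission imports Defs begin

lemma Delta_linear: "Vector_Spaces.linear ((*s)) mat_scale (Delta :: 'a::field^'n \<Rightarrow> _)"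
  by unfold_locales (auto simp: Delta_def mat_scale_def vec_eq_iff)

lemma Delta_inj: "inj Delta"
  unfolding inj_def Delta_def vec_eq_iff by (metis (mono_tags, lifting) vec_lambda_beta)

lemma dim_Delta: "mat.dim (Delta ` S) = vec.dim (S :: ('a::field^'n) set)"
proof -
  interpret P: finite_dimensional_vector_space_pair_1 "(*s)" "cart_basis :: ('a^'n) set" "mat_scale :: 'a \<Rightarrow> 'a^'n^'n \<Rightarrow> _"
    by unfold_locales
  show ?thesis by (rule P.dim_image_eq[OF Delta_linear]) (auto intro: inj_on_subset[OF Delta_inj])
qed

lemma row_Delta: "Delta c $ i = c $ i *s axis i 1"
  by (auto simp: Delta_def vec_eq_iff axis_def)

lemma Delta_VL:
  assumes "vec.subspace L"
  shows "Delta c \<in> VL L \<longleftrightarrow> c \<in> LI {i. axis i 1 \<in> L}"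
proof -
  have "Delta c \<in> VL L \<longleftrightarrow> (\<forall>i. c $ i *s axis i 1 \<in> L)"
  proof
    assume "Delta c \<in> VL L"
    then have "Row (Delta c) \<subseteq> L" by (simp add: VL_def)
    show "\<forall>i. c $ i *s axis i 1 \<in> L"
    proof (intro allI)
      fix i
      have "Delta c $ i \<in> vec.span {Delta c $ i | i. True}" by (rule vec.span_base) blast
      then have "Delta c $ i \<in> L" using \<open>Row (Delta c) \<subseteq> L\<close> unfolding Row_def by (rule subsetD[rotated])
      then show "c $ i *s axis i 1 \<in> L" by (simp only: row_Delta)
    qed
  next
    assume "\<forall>i. c $ i *s axis i 1 \<in> L"
    then have "{Delta c $ i | i. True} \<subseteq> L" by (auto simp: row_Delta)
    then have "vec.span {Delta c $ i | i. True} \<subseteq> L" by (rule vec.span_minimal[OF _ assms])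
    then show "Delta c \<in> VL L" unfolding VL_def Row_def by simp
  qed
  also have "\<dots> \<longleftrightarrow> c \<in> LI {i. axis i 1 \<in> L}"
  proof
    assume h: "\<forall>i. c $ i *s axis i 1 \<in> L"
    show "c \<in> LI {i. axis i 1 \<in> L}" unfolding LI_def
    proof (intro CollectI allI impI)
      fix i assume "i \<notin> {i. axis i (1::'a) \<in> L}"
      then have ax: "axis i 1 \<notin> L" by simp
      show "c $ i = 0"
      proof (rule ccontr)
        assume nz: "c $ i \<noteq> 0"
        have "inverse (c$i) *s (c $ i *s axis i 1) \<in> L" using vec.subspace_scale[OF assms] h by blast
        then have "axis i 1 \<in> L" using nz by simp
        with ax show False by contradiction
      qed
    qed
  next
    assume "c \<in> LI {i. axis i 1 \<in> L}"
    then have h: "\<forall>i. c $ i \<noteq> 0 \<longrightarrow> axis i 1 \<in> L" unfolding LI_def by blast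
    show "\<forall>i. c $ i *s axis i 1 \<in> L"
    proof
      fix i
      show "c $ i *s axis i 1 \<in> L" using h vec.subspace_scale[OF assms] vec.subspace_0[OF assms]
        by (cases "c $ i = 0") auto
    qed
  qed
  finally show ?thesis .
qed

lemma Delta_inter: "vec.subspace L \<Longrightarrow> Delta ` C \<inter> VL L = Delta ` (C \<inter> LI {i. axis i 1 \<in> L})"
  using Delta_VL by auto

lemma card_IL: "vec.subspace L \<Longrightarrow> card {i. axis i (1::'a::field) \<in> (L::('a^'n) set)} \<le> vec.dim L"
proof -
  assume L: "vec.subspace L"
  let ?I = "{i. axis i (1::'a) \<in> L}"
  have "card ((\<lambda>i. axis i (1::'a)) ` ?I) = card ?I"
    by (rule card_image) (auto simp: inj_on_def axis_eq_axis)
  moreover have "card ((\<lambda>i. axis i (1::'a)) ` ?I) \<le> vec.dim L"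
    apply (rule vec.independent_card_le_dim)
     apply blast
    apply (rule vec.independent_mono[OF independent_cart_basis])
    by (auto simp: cart_basis_def)
  ultimately show ?thesis by simp
qed

lemma LI_subspace: "vec.subspace (LI I)"
  by (auto simp: vec.subspace_def LI_def)

lemma LI_axis: "axis i (1::'a::field) \<in> LI I \<longleftrightarrow> i \<in> I"
  by (auto simp: LI_def axis_def)

lemma dim_LI: "vec.dim (LI I :: ('a::field^'n) set) \<le> card I"
proof -
  have "LI I \<subseteq> vec.span ((\<lambda>i. axis i (1::'a)) ` I)"
  proof
    fix c :: "'a^'n" assume c: "c \<in> LI I"
    have "c = (\<Sum>i\<in>UNIV. c$i *s axis i 1)" by (simp add: basis_expansion)
    also have "\<dots> = (\<Sum>i\<in>I. c$i *s axis i 1)"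
      by (rule sum.mono_neutral_right) (use c in \<open>auto simp: LI_def\<close>)
    also have "\<dots> \<in> vec.span ((\<lambda>i. axis i (1::'a)) ` I)"
      by (intro vec.span_sum vec.span_scale vec.span_base) auto
    finally show "c \<in> vec.span ((\<lambda>i. axis i (1::'a)) ` I)" .
  qed
  then have "vec.dim (LI I :: ('a::field^'n) set) \<le> card ((\<lambda>i. axis i (1::'a)) ` I)"
    by (rule vec.dim_le_card) auto
  also have "\<dots> \<le> card I" by (rule card_image_le) auto
  finally show ?thesis .
qed

lemma least_eq:
  fixes P Q :: "nat \<Rightarrow> bool"
  assumes "\<And>m. P m \<Longrightarrow> \<exists>m'\<le>m. Q m'" "\<And>m. Q m \<Longrightarrow> \<exists>m'\<le>m. P m'" "P k"
  shows "Least P = Least Q"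
proof -
  obtain m where "m \<le> k" "Q m" using assms by blast
  have lp: "P (Least P)" using assms(3) by (rule LeastI)
  have lq: "Q (Least Q)" using \<open>Q m\<close> by (rule LeastI)
  obtain a where "a \<le> Least P" "Q a" using assms(1)[OF lp] by blast
  then have 1: "Least Q \<le> Least P" using Least_le[of Q a] by linarith
  obtain b where "b \<le> Least Q" "P b" using assms(2)[OF lq] by blast
  then have "Least P \<le> Least Q" using Least_le[of P b] by linarith
  with 1 show ?thesis by simp
qed

theorem theorem8:
  fixes C1 C2 :: "('a::field ^ 'n) set"
  assumes "vec.subspace C1" and "vec.subspace C2" and "C2 \<subset> C1"
    and "1 \<le> r" and "r \<le> vec.dim C1 - vec.dim C2"
    and "\<mu> \<le> CARD('n)"
  shows "dHr r C1 C2 = dMr r (Delta ` C1) (Delta ` C2)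
    \<and> KH \<mu> C1 C2 = KM \<mu> (Delta ` C1) (Delta ` C2)"
proof
  define d where "d I = int (vec.dim (C1 \<inter> LI I)) - int (vec.dim (C2 \<inter> LI I))" for I :: "'n set"
  have dm: "int (mat.dim (Delta ` C1 \<inter> VL L)) - int (mat.dim (Delta ` C2 \<inter> VL L))
     = d {i. axis i 1 \<in> L}" if "vec.subspace L" for L :: "('a^'n) set"
    using that by (simp add: Delta_inter dim_Delta d_def)
  have dm2: "int (mat.dim (Delta ` C1 \<inter> VL (LI I))) - int (mat.dim (Delta ` C2 \<inter> VL (LI I)))
     = d I" for I
    using dm[OF LI_subspace, of I] by (simp add: LI_axis)
  show "dHr r C1 C2 = dMr r (Delta ` C1) (Delta ` C2)"
    unfolding dHr_def dMr_def d_def[symmetric]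
  proof (rule least_eq)
    fix m assume "\<exists>I. card I = m \<and> int r \<le> d I"
    then obtain I where "card I = m" "int r \<le> d I" by blast
    then show "\<exists>m'\<le>m. \<exists>L. vec.subspace L \<and> vec.dim L = m' \<and>
      int r \<le> int (mat.dim (Delta ` C1 \<inter> VL L)) - int (mat.dim (Delta ` C2 \<inter> VL L))"
      using dim_LI[of I] LI_subspace[of I] dm2[of I] by metis
  next
    fix m assume "\<exists>L::('a^'n) set. vec.subspace L \<and> vec.dim L = m \<and>
      int r \<le> int (mat.dim (Delta ` C1 \<inter> VL L)) - int (mat.dim (Delta ` C2 \<inter> VL L))"
    then obtain L :: "('a^'n) set" where L: "vec.subspace L" "vec.dim L = m"
      "int r \<le> int (mat.dim (Delta ` C1 \<inter> VL L)) - int (mat.dim (Delta ` C2 \<inter> VL L))" by blast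
    then show "\<exists>m'\<le>m. \<exists>I. card I = m' \<and> int r \<le> d I"
      using dm[OF L(1)] card_IL[OF L(1)] by metis
  next
    have "LI UNIV = (UNIV :: ('a^'n) set)" by (auto simp: LI_def)
    then have "d UNIV = int (vec.dim C1) - int (vec.dim C2)" by (simp add: d_def)
    then show "\<exists>I. card I = CARD('n) \<and> int r \<le> d I" using assms(4,5) by (intro exI[of _ UNIV]) auto
  qed
  show "KH \<mu> C1 C2 = KM \<mu> (Delta ` C1) (Delta ` C2)"
    unfolding KH_def KM_def d_def[symmetric]
  proof (rule arg_cong[where f=Max])
    show "{d I |I. card I \<le> \<mu>} = {int (mat.dim (Delta ` C1 \<inter> VL L)) - int (mat.dim (Delta ` C2 \<inter> VL L)) |L.
        vec.subspace L \<and> vec.dim L \<le> \<mu>}"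
    proof (intro equalityI subsetI)
      fix x assume "x \<in> {d I |I. card I \<le> \<mu>}"
      then obtain I where "x = d I" "card I \<le> \<mu>" by blast
      then show "x \<in> {int (mat.dim (Delta ` C1 \<inter> VL L)) - int (mat.dim (Delta ` C2 \<inter> VL L)) |L.
        vec.subspace L \<and> vec.dim L \<le> \<mu>}"
      proof -
        have "vec.dim (LI I :: ('a^'n) set) \<le> \<mu>" by (rule le_trans[OF dim_LI \<open>card I \<le> \<mu>\<close>])
        then show ?thesis using LI_subspace[of I] dm2[of I] \<open>x = d I\<close>
          by (intro CollectI exI[of _ "LI I"]) simp
      qed
    next
      fix x assume "x \<in> {int (mat.dim (Delta ` C1 \<inter> VL L)) - int (mat.dim (Delta ` C2 \<inter> VL L)) |L::('a^'n) set.
        vec.subspace L \<and> vec.dim L \<le> \<mu>}"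
      then obtain L :: "('a^'n) set" where L: "vec.subspace L" "vec.dim L \<le> \<mu>"
        "x = int (mat.dim (Delta ` C1 \<inter> VL L)) - int (mat.dim (Delta ` C2 \<inter> VL L))" by blast
      then show "x \<in> {d I |I. card I \<le> \<mu>}"
      proof -
        have "card {i. axis i (1::'a) \<in> L} \<le> \<mu>" using card_IL[OF L(1)] L(2) by linarith
        then show ?thesis using dm[OF L(1)] L(3)
          by (intro CollectI exI[of _ "{i. axis i 1 \<in> L}"]) simp
      qed
    qed
  qed
qed
end
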